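(* There exists a locally convex topology $\tau$ on the closed unit ball $B_{c_0}$ of $c_0$, containing the weak topology of $B_{c_0}$, such that $B_{c_0}$ is $\tau$-strongly regular for open subsets, while every nonempty $\tau$-open subset of $B_{c_0}$ has (norm) diameter $2$.
   Context: $c_0$ carries its usual sup norm. Locally convex means having a basis of convex open sets. For $O\subset B_{c_0}$, $\tau|_O$ denotes the induced topology. $B_{c_0}$ is $\tau$-strongly regular for open subsets if for every nonempty convex $\tau$-open subset $O$ of $B_{c_0}$ and every $\varepsilon>0$ there is a convex combination (Minkowski sum $\sum_i\lambda_iU_i$, $\lambda_i\ge0$, $\sum\lambda_i=1$) of nonempty $\tau|_O$-open sets $U_i$ with norm diameter less than $\varepsilon$. *)

theory Defs
  imports "HOL-Analysis.Analysis"
begin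

definition c0 :: "(nat \<Rightarrow> real) set" where
  "c0 = {x. x \<longlonglongrightarrow> 0}"

definition c0_norm :: "(nat \<Rightarrow> real) \<Rightarrow> real" where
  "c0_norm x = (SUP n. \<bar>x n\<bar>)"

definition c0_ball :: "(nat \<Rightarrow> real) set" where
  "c0_ball = {x \<in> c0. c0_norm x \<le> 1}"

definition c0_dual :: "((nat \<Rightarrow> real) \<Rightarrow> real) set" where
  "c0_dual = {f. (\<forall>x\<in>c0. \<forall>y\<in>c0. \<forall>a b. f (\<lambda>n. a * x n + b * y n) = a * f x + b * f y)
                 \<and> (\<exists>C. \<forall>x\<in>c0. \<bar>f x\<bar> \<le> C * c0_norm x)}"

definition weak_ball_topology :: "(nat \<Rightarrow> real) topology" where
  "weak_ball_topology = topology_generated_by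
     (insert c0_ball {{x \<in> c0_ball. f x \<in> V} | f V. f \<in> c0_dual \<and> open V})"

definition seq_convex :: "(nat \<Rightarrow> real) set \<Rightarrow> bool" where
  "seq_convex S \<longleftrightarrow> (\<forall>x\<in>S. \<forall>y\<in>S. \<forall>t::real. 0 \<le> t \<and> t \<le> 1 \<longrightarrow>
       (\<lambda>n. (1 - t) * x n + t * y n) \<in> S)"

definition c0_diam :: "(nat \<Rightarrow> real) set \<Rightarrow> real" where
  "c0_diam S = (SUP p\<in>S \<times> S. c0_norm (\<lambda>n. fst p n - snd p n))"

definition locally_convex_top :: "(nat \<Rightarrow> real) topology \<Rightarrow> bool" where
  "locally_convex_top T \<longleftrightarrow> (\<forall>U x. openin T U \<and> x \<in> U \<longrightarrow>
      (\<exists>V. openin T V \<and> seq_convex V \<and> x \<in> V \<and> V \<subseteq> U))"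

definition mink_comb :: "nat \<Rightarrow> (nat \<Rightarrow> real) \<Rightarrow> (nat \<Rightarrow> (nat \<Rightarrow> real) set) \<Rightarrow> (nat \<Rightarrow> real) set" where
  "mink_comb m lam U = {z. \<exists>u. (\<forall>i<m. u i \<in> U i) \<and> z = (\<lambda>k. \<Sum>i<m. lam i * u i k)}"

definition strongly_regular_open :: "(nat \<Rightarrow> real) topology \<Rightarrow> bool" where
  "strongly_regular_open T \<longleftrightarrow>
     (\<forall>W \<epsilon>. openin T W \<and> W \<noteq> {} \<and> seq_convex W \<and> \<epsilon> > 0 \<longrightarrow>
        (\<exists>m lam U. (\<forall>i<m. lam i \<ge> 0) \<and> (\<Sum>i<m. lam i) = 1 \<and>
            (\<forall>i<m. U i \<noteq> {} \<and> openin (subtopology T W) (U i)) \<and>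
            c0_diam (mink_comb m lam U) < \<epsilon>))"

end

theory Submission
  imports Defs
begin

lemma c0_bdd: "x \<in> c0 \<Longrightarrow> bdd_above (range (\<lambda>n. \<bar>x n\<bar>))"
proof -
  assume "x \<in> c0"
  then have "convergent x" unfolding c0_def convergent_def by auto
  then have "Bseq x" by (rule convergent_imp_Bseq)
  then obtain K where "\<forall>n. norm (x n) \<le> K" unfolding Bseq_def by auto
  then show ?thesis by (auto intro!: bdd_aboveI[where M=K])
qed

lemma c0_le_norm: "x \<in> c0 \<Longrightarrow> \<bar>x n\<bar> \<le> c0_norm x"
  unfolding c0_norm_def by (rule cSUP_upper[OF _ c0_bdd]) auto

lemma c0_norm_le: "(\<And>n. \<bar>x n\<bar> \<le> D) \<Longrightarrow> c0_norm x \<le> D"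
  unfolding c0_norm_def by (rule cSUP_least) auto

lemma c0_ball_iff: "x \<in> c0_ball \<longleftrightarrow> x \<in> c0 \<and> (\<forall>n. \<bar>x n\<bar> \<le> 1)"
  unfolding c0_ball_def using c0_le_norm c0_norm_le by (metis (mono_tags, lifting) mem_Collect_eq order_trans)

lemma c0_lin: "x \<in> c0 \<Longrightarrow> y \<in> c0 \<Longrightarrow> (\<lambda>n. a * x n + b * y n) \<in> c0"
  unfolding c0_def using tendsto_add[OF tendsto_mult_right_zero tendsto_mult_right_zero] by auto

definition ee :: "nat \<Rightarrow> nat \<Rightarrow> real" where "ee k = (\<lambda>n. if n = k then 1 else 0)"

lemma ee_c0: "ee k \<in> c0"
proof -
  have "eventually (\<lambda>n. ee k n = 0) sequentially"
    unfolding ee_def eventually_sequentially by (rule exI[of _ "Suc k"]) auto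
  then show ?thesis unfolding c0_def by (auto intro: tendsto_eventually)
qed

lemma zero_c0: "(\<lambda>n. 0::real) \<in> c0" unfolding c0_def by auto

lemma dual_lin: assumes "f \<in> c0_dual" "x \<in> c0" "y \<in> c0"
  shows "f (\<lambda>n. x n + s * y n) = f x + s * f y"
proof -
  have "f (\<lambda>n. 1 * x n + s * y n) = 1 * f x + s * f y"
    using assms unfolding c0_dual_def by blast
  then show ?thesis by simp
qed

lemma dual_zero: assumes "f \<in> c0_dual" shows "f (\<lambda>n. 0) = 0"
proof -
  have "f (\<lambda>n. 0 * ee 0 n + 0 * ee 0 n) = 0 * f (ee 0) + 0 * f (ee 0)"
    using assms ee_c0 unfolding c0_dual_def by blast
  then show ?thesis by simp
qed

lemma dual_sum: assumes "f \<in> c0_dual" "finite S"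
  shows "f (\<lambda>n. \<Sum>k\<in>S. a k * ee k n) = (\<Sum>k\<in>S. a k * f (ee k))
     \<and> (\<lambda>n. \<Sum>k\<in>S. a k * ee k n) \<in> c0"
  using assms(2)
proof (induction S rule: finite_induct)
  case empty
  then show ?case using dual_zero[OF assms(1)] zero_c0 by simp
next
  case (insert j S)
  let ?v = "(\<lambda>n. \<Sum>k\<in>S. a k * ee k n)"
  have eq: "(\<lambda>n. \<Sum>k\<in>insert j S. a k * ee k n) = (\<lambda>n. ?v n + a j * ee j n)"
    using insert by (simp add: add.commute)
  show ?case unfolding eq using insert dual_lin[OF assms(1), of ?v "ee j" "a j"] ee_c0
      c0_lin[of ?v "ee j" 1 "a j"]
    by (simp add: add.commute)
qed

lemma dual_ee_tendsto: assumes "f \<in> c0_dual" shows "(\<lambda>k. f (ee k)) \<longlonglongrightarrow> 0"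
proof -
  obtain C where C: "\<forall>x\<in>c0. \<bar>f x\<bar> \<le> C * c0_norm x" using assms unfolding c0_dual_def by blast
  have "(\<Sum>k<N. \<bar>f (ee k)\<bar>) \<le> max C 0" for N
  proof -
    let ?a = "\<lambda>k. sgn (f (ee k))"
    let ?v = "(\<lambda>n. \<Sum>k\<in>{..<N}. ?a k * ee k n)"
    from dual_sum[OF assms, of "{..<N}" ?a] have v: "f ?v = (\<Sum>k<N. ?a k * f (ee k))" "?v \<in> c0" by auto
    have "\<bar>?v n\<bar> \<le> 1" for n
    proof (cases "n < N")
      case True
      have "?v n = (\<Sum>k\<in>{..<N}. if k = n then ?a k else 0)"
        by (rule sum.cong) (auto simp: ee_def)
      also have "\<dots> = ?a n" using True by simp
      finally show ?thesis by (simp add: abs_sgn_eq)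
    next
      case False
      have "?v n = 0" by (rule sum.neutral) (use False in \<open>auto simp: ee_def\<close>)
      then show ?thesis by simp
    qed
    then have "c0_norm ?v \<le> 1" by (rule c0_norm_le)
    have "(\<Sum>k<N. \<bar>f (ee k)\<bar>) = f ?v" unfolding v by (rule sum.cong) (auto simp: abs_sgn)
    also have "\<dots> \<le> \<bar>f ?v\<bar>" by simp
    also have "\<dots> \<le> C * c0_norm ?v" using C v by auto
    also have "\<dots> \<le> max C 0"
    proof -
      have n0: "0 \<le> c0_norm ?v" using c0_le_norm[OF v(2), of 0] by linarith
      show ?thesis
      proof (cases "C \<ge> 0")
        case True then show ?thesis using mult_left_le[OF \<open>c0_norm ?v \<le> 1\<close> True] by simp
      next
        case False then show ?thesis using n0 by (simp add: mult_nonpos_nonneg)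
      qed
    qed
    finally show ?thesis .
  qed
  then have "summable (\<lambda>k. \<bar>f (ee k)\<bar>)" by (intro summableI_nonneg_bounded) auto
  then have "(\<lambda>k. \<bar>f (ee k)\<bar>) \<longlonglongrightarrow> 0" by (rule summable_LIMSEQ_zero)
  then show ?thesis by (simp add: tendsto_rabs_zero_iff)
qed

definition slab :: "((nat \<Rightarrow> real) \<Rightarrow> real) \<Rightarrow> real \<Rightarrow> real \<Rightarrow> (nat \<Rightarrow> real) set" where
  "slab f a b = {z \<in> c0_ball. a < f z \<and> f z < b}"

definition tube :: "(nat \<Rightarrow> real) \<Rightarrow> real \<Rightarrow> nat set \<Rightarrow> (nat \<Rightarrow> real) set" where
  "tube c d A = {z \<in> c0_ball. \<bar>z 0 - c 0\<bar> < d \<and> (\<forall>k\<in>A. \<bar>z k - c k\<bar> < d)}"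

definition Psi :: "real \<Rightarrow> nat set" where
  "Psi t = {p^2 + m | p m. 1 \<le> p \<and> m \<le> 2*p \<and> \<bar>t - (real m / real p - 1)\<bar> < 1 / real p}"

definition allowed :: "(nat \<Rightarrow> real) \<Rightarrow> real \<Rightarrow> nat set \<Rightarrow> bool" where
  "allowed c d A \<longleftrightarrow> (\<forall>t. \<bar>t - c 0\<bar> < d \<longrightarrow> A \<inter> Psi t = {})"

definition SS :: "(nat \<Rightarrow> real) set set" where
  "SS = {slab f a b | f a b. f \<in> c0_dual} \<union> {tube c d A | c d A. allowed c d A}"

definition Op :: "(nat \<Rightarrow> real) set \<Rightarrow> bool" where
  "Op U \<longleftrightarrow> (\<forall>x\<in>U. \<exists>F. finite F \<and> F \<subseteq> SS \<and> x \<in> c0_ball \<and> x \<in> \<Inter>F \<and> c0_ball \<inter> \<Inter>F \<subseteq> U)"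

definition tau :: "(nat \<Rightarrow> real) topology" where "tau = topology Op"

lemma istop_Op: "istopology Op"
  unfolding istopology_def
proof (intro conjI allI impI)
  fix S T assume S: "Op S" and T: "Op T"
  show "Op (S \<inter> T)" unfolding Op_def
  proof
    fix x assume x: "x \<in> S \<inter> T"
    have "x \<in> S" "x \<in> T" using x by auto
    from S[unfolded Op_def, rule_format, OF this(1)] obtain F where
      "finite F" "F \<subseteq> SS" "x \<in> c0_ball" "x \<in> \<Inter>F" "c0_ball \<inter> \<Inter>F \<subseteq> S"
      by (elim exE conjE)
    moreover from T[unfolded Op_def, rule_format, OF \<open>x \<in> T\<close>] obtain G where
      "finite G" "G \<subseteq> SS" "x \<in> \<Inter>G" "c0_ball \<inter> \<Inter>G \<subseteq> T"
      by (elim exE conjE)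
    ultimately show "\<exists>F. finite F \<and> F \<subseteq> SS \<and> x \<in> c0_ball \<and> x \<in> \<Inter>F \<and> c0_ball \<inter> \<Inter>F \<subseteq> S \<inter> T"
      by (intro exI[of _ "F \<union> G"]) auto
  qed
next
  fix K assume "\<forall>S\<in>K. Op S"
  then show "Op (\<Union>K)" unfolding Op_def
  proof (intro ballI)
    fix x assume H: "\<forall>S\<in>K. \<forall>x\<in>S. \<exists>F. finite F \<and> F \<subseteq> SS \<and> x \<in> c0_ball \<and> x \<in> \<Inter> F \<and> c0_ball \<inter> \<Inter> F \<subseteq> S"
      and x: "x \<in> \<Union>K"
    then obtain S where S: "S \<in> K" "x \<in> S" by auto
    from H[rule_format, OF S] obtain F where
      "finite F" "F \<subseteq> SS" "x \<in> c0_ball" "x \<in> \<Inter>F" "c0_ball \<inter> \<Inter>F \<subseteq> S"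
      by (elim exE conjE)
    then show "\<exists>F. finite F \<and> F \<subseteq> SS \<and> x \<in> c0_ball \<and> x \<in> \<Inter> F \<and> c0_ball \<inter> \<Inter> F \<subseteq> \<Union>K"
      using S by (intro exI[of _ F]) auto
  qed
qed

lemma openin_tau: "openin tau U \<longleftrightarrow> Op U"
  unfolding tau_def using istop_Op by simp

lemma Op_sub: "Op U \<Longrightarrow> U \<subseteq> c0_ball"
  unfolding Op_def by blast

lemma Op_basic: "finite F \<Longrightarrow> F \<subseteq> SS \<Longrightarrow> Op (c0_ball \<inter> \<Inter>F)"
  unfolding Op_def by blast

lemma topspace_tau: "topspace tau = c0_ball"
proof -
  have "Op c0_ball" using Op_basic[of "{}"] by simp
  then show ?thesis unfolding topspace_def openin_tau using Op_sub by blast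
qed

lemma convex_ball: "seq_convex c0_ball"
  unfolding seq_convex_def
proof (intro ballI allI impI)
  fix x y and t :: real assume x: "x \<in> c0_ball" and y: "y \<in> c0_ball" and t: "0 \<le> t \<and> t \<le> 1"
  have "(\<lambda>n. (1 - t) * x n + t * y n) \<in> c0" using x y c0_lin unfolding c0_ball_iff by blast
  moreover have "\<bar>(1 - t) * x n + t * y n\<bar> \<le> 1" for n
  proof -
    have "\<bar>(1 - t) * x n + t * y n\<bar> \<le> (1 - t) * \<bar>x n\<bar> + t * \<bar>y n\<bar>"
      using abs_triangle_ineq[of "(1 - t) * x n" "t * y n"] t by (simp add: abs_mult)
    also have "\<dots> \<le> (1 - t) * 1 + t * 1" using x y t unfolding c0_ball_iff
      by (intro add_mono mult_left_mono) auto
    finally show ?thesis by simp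
  qed
  ultimately show "(\<lambda>n. (1 - t) * x n + t * y n) \<in> c0_ball" unfolding c0_ball_iff by blast
qed

lemma convex_SS: "S \<in> SS \<Longrightarrow> seq_convex S"
proof -
  assume "S \<in> SS"
  then consider (s) f a b where "S = slab f a b" "f \<in> c0_dual" | (t) c d A where "S = tube c d A"
    unfolding SS_def by blast
  then show ?thesis
  proof cases
    case s
    show ?thesis unfolding seq_convex_def
    proof (intro ballI allI impI)
      fix x y and t :: real assume x: "x \<in> S" and y: "y \<in> S" and t: "0 \<le> t \<and> t \<le> 1"
      have xb: "x \<in> c0_ball" and yb: "y \<in> c0_ball" using x y s unfolding slab_def by auto
      then have "(\<lambda>n. (1 - t) * x n + t * y n) \<in> c0_ball" using convex_ball t unfolding seq_convex_def by blast
      moreover have "f (\<lambda>n. (1 - t) * x n + t * y n) = (1 - t) * f x + t * f y"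
        using s xb yb unfolding c0_dual_def c0_ball_def by blast
      moreover have "a < (1 - t) * f x + t * f y \<and> (1 - t) * f x + t * f y < b"
      proof -
        have "a < f x" "f x < b" "a < f y" "f y < b" using x y s unfolding slab_def by auto
        moreover have "(1 - t) * min (f x) (f y) \<le> (1 - t) * f x" using t by (intro mult_left_mono) auto
        moreover have "t * min (f x) (f y) \<le> t * f y" using t by (intro mult_left_mono) auto
        moreover have "(1 - t) * max (f x) (f y) \<ge> (1 - t) * f x" using t by (intro mult_left_mono) auto
        moreover have "t * max (f x) (f y) \<ge> t * f y" using t by (intro mult_left_mono) auto
        ultimately show ?thesis by (auto simp: algebra_simps min_def max_def split: if_splits)
      qed
      ultimately show "(\<lambda>n. (1 - t) * x n + t * y n) \<in> S" unfolding s slab_def by simp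
    qed
  next
    case t
    show ?thesis unfolding seq_convex_def
    proof (intro ballI allI impI)
      fix x y and s :: real assume x: "x \<in> S" and y: "y \<in> S" and s: "0 \<le> s \<and> s \<le> 1"
      have xb: "x \<in> c0_ball" and yb: "y \<in> c0_ball" using x y t unfolding tube_def by auto
      then have "(\<lambda>n. (1 - s) * x n + s * y n) \<in> c0_ball" using convex_ball s unfolding seq_convex_def by blast
      moreover have key: "\<bar>(1 - s) * x k + s * y k - c k\<bar> < d" if "\<bar>x k - c k\<bar> < d" "\<bar>y k - c k\<bar> < d" for k
      proof -
        have "\<bar>(1 - s) * x k + s * y k - c k\<bar> = \<bar>(1 - s) * (x k - c k) + s * (y k - c k)\<bar>"
          by (simp add: algebra_simps)
        also have "\<dots> \<le> (1 - s) * \<bar>x k - c k\<bar> + s * \<bar>y k - c k\<bar>"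
          using abs_triangle_ineq[of "(1 - s) * (x k - c k)" "s * (y k - c k)"] s by (simp add: abs_mult)
        also have "\<dots> < (1 - s) * d + s * d"
        proof (cases "s = 0")
          case True then show ?thesis using that by simp
        next
          case False
          then have "s * \<bar>y k - c k\<bar> < s * d" using s that by simp
          moreover have "(1 - s) * \<bar>x k - c k\<bar> \<le> (1 - s) * d" using s that by (intro mult_left_mono) auto
          ultimately show ?thesis by linarith
        qed
        finally show ?thesis by (simp add: algebra_simps)
      qed
      ultimately show "(\<lambda>n. (1 - s) * x n + s * y n) \<in> S" using x y unfolding t tube_def by auto
    qed
  qed
qed

lemma convex_basic: "F \<subseteq> SS \<Longrightarrow> seq_convex (c0_ball \<inter> \<Inter>F)"
  using convex_SS convex_ball unfolding seq_convex_def by (simp add: subset_iff)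

lemma lc_tau: "locally_convex_top tau"
  unfolding locally_convex_top_def openin_tau
proof (intro allI impI)
  fix U x assume "Op U \<and> x \<in> U"
  then obtain F where F: "finite F" "F \<subseteq> SS" "x \<in> c0_ball" "x \<in> \<Inter>F" "c0_ball \<inter> \<Inter>F \<subseteq> U"
    unfolding Op_def by blast
  then show "\<exists>V. Op V \<and> seq_convex V \<and> x \<in> V \<and> V \<subseteq> U"
    by (intro exI[of _ "c0_ball \<inter> \<Inter>F"]) (auto intro: Op_basic convex_basic)
qed

lemma weak_tau: "openin weak_ball_topology U \<Longrightarrow> openin tau U"
  unfolding weak_ball_topology_def openin_topology_generated_by_iff
proof (induction rule: generate_topology_on.induct)
  case Empty
  then show ?case unfolding openin_tau Op_def by simp
next
  case (Int a b)
  then show ?case by (simp add: openin_Int)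
next
  case (UN K)
  then show ?case by (simp add: openin_Union)
next
  case (Basis s)
  then consider "s = c0_ball" | f V where "s = {x \<in> c0_ball. f x \<in> V}" "f \<in> c0_dual" "open V"
    by blast
  then show ?case
  proof cases
    case 1
    then show ?thesis using topspace_tau openin_topspace by metis
  next
    case 2
    show ?thesis unfolding openin_tau Op_def
    proof
      fix x assume x: "x \<in> s"
      then have "f x \<in> V" "x \<in> c0_ball" using 2 by auto
      then obtain e where e: "e > 0" "ball (f x) e \<subseteq> V" using \<open>open V\<close> open_contains_ball by blast
      let ?S = "slab f (f x - e) (f x + e)"
      have "?S \<in> SS" unfolding SS_def using 2 by blast
      moreover have "x \<in> ?S" using x e \<open>x \<in> c0_ball\<close> unfolding slab_def by auto
      moreover have "c0_ball \<inter> ?S \<subseteq> s"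
      proof
        fix z assume "z \<in> c0_ball \<inter> ?S"
        then have "z \<in> c0_ball" "f z \<in> ball (f x) e" unfolding slab_def by (auto simp: dist_real_def)
        then show "z \<in> s" using e 2 by auto
      qed
      ultimately show "\<exists>F. finite F \<and> F \<subseteq> SS \<and> x \<in> c0_ball \<and> x \<in> \<Inter>F \<and> c0_ball \<inter> \<Inter>F \<subseteq> s"
        using \<open>x \<in> c0_ball\<close> by (intro exI[of _ "{?S}"]) auto
    qed
  qed
qed

lemma diam_le: assumes "S \<noteq> {}" "\<And>z z'. z \<in> S \<Longrightarrow> z' \<in> S \<Longrightarrow> c0_norm (\<lambda>n. z n - z' n) \<le> D"
  shows "c0_diam S \<le> D"
  unfolding c0_diam_def using assms by (intro cSUP_least) auto

lemma ball_diff_le2: "z \<in> c0_ball \<Longrightarrow> z' \<in> c0_ball \<Longrightarrow> c0_norm (\<lambda>n. z n - z' n) \<le> 2"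
proof (rule c0_norm_le)
  fix n assume "z \<in> c0_ball" "z' \<in> c0_ball"
  then have "\<bar>z n\<bar> \<le> 1" "\<bar>z' n\<bar> \<le> 1" unfolding c0_ball_iff by auto
  then show "\<bar>z n - z' n\<bar> \<le> 2" by linarith
qed

lemma diam_ge: assumes "S \<subseteq> c0_ball" "z \<in> S" "z' \<in> S" "u \<le> c0_norm (\<lambda>n. z n - z' n)"
  shows "u \<le> c0_diam S"
  unfolding c0_diam_def
proof (rule cSUP_upper2[of _ _ "(z, z')"])
  show "bdd_above ((\<lambda>p. c0_norm (\<lambda>n. fst p n - snd p n)) ` (S \<times> S))"
  proof (rule bdd_aboveI[of _ 2])
    fix r assume "r \<in> (\<lambda>p. c0_norm (\<lambda>n. fst p n - snd p n)) ` (S \<times> S)"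
    then obtain p where p: "p \<in> S \<times> S" "r = c0_norm (\<lambda>n. fst p n - snd p n)" by auto
    then show "r \<le> 2" using p assms(1) ball_diff_le2 by (auto simp: mem_Times_iff)
  qed
qed (use assms in auto)

lemma psi_pos: "k \<in> Psi t \<Longrightarrow> k \<noteq> 0"
  unfolding Psi_def by auto

lemma psi_inf: assumes "\<bar>t\<bar> \<le> 1" shows "\<exists>k\<in>Psi t. k \<ge> N"
proof -
  define p :: nat where "p = N + 1"
  define m :: nat where "m = nat \<lfloor>(t + 1) * real p\<rfloor>"
  have p1: "1 \<le> p" unfolding p_def by simp
  have nn: "0 \<le> (t + 1) * real p" using assms by simp
  have rm: "real m = of_int \<lfloor>(t + 1) * real p\<rfloor>" unfolding m_def using nn by simp
  have lo: "(t + 1) * real p - 1 < real m" and hi: "real m \<le> (t + 1) * real p"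
    unfolding rm by linarith+
  have "(t + 1) * real p \<le> 2 * real p" using assms by (intro mult_right_mono) auto
  then have "real m \<le> 2 * real p" using hi by linarith
  then have m2: "m \<le> 2 * p" by linarith
  have pp: "real p > 0" using p1 by simp
  have "\<bar>t - (real m / real p - 1)\<bar> < 1 / real p"
  proof -
    have e1: "t - (real m / real p - 1) = ((t + 1) * real p - real m) / real p"
      using pp by (simp add: field_simps)
    have "0 \<le> ((t + 1) * real p - real m) / real p" using hi pp by simp
    moreover have "((t + 1) * real p - real m) / real p < 1 / real p"
      using lo pp by (intro divide_strict_right_mono) auto
    ultimately show ?thesis unfolding e1 by simp
  qed
  then have "p^2 + m \<in> Psi t" unfolding Psi_def mem_Collect_eq
    by (intro exI[of _ p] exI[of _ m] conjI refl p1 m2)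
  moreover have "N \<le> p^2 + m" unfolding p_def power2_eq_square by simp
  ultimately show ?thesis by blast
qed

lemma sq_unique: assumes "(p::nat)^2 + m = q^2 + m'" "m \<le> 2*p" "m' \<le> 2*q" shows "p = q"
proof (rule ccontr)
  assume "p \<noteq> q"
  then consider "p < q" | "q < p" by linarith
  then show False
  proof cases
    case 1
    then have "(p+1)^2 \<le> q^2" by (simp add: power_mono)
    then show False using assms by (simp add: power2_eq_square algebra_simps)
  next
    case 2
    then have "(q+1)^2 \<le> p^2" by (simp add: power_mono)
    then show False using assms by (simp add: power2_eq_square algebra_simps)
  qed
qed

lemma sq_big: assumes "(M::nat)^2 \<le> p^2 + m" "m \<le> 2*p" shows "M \<le> p"
proof (rule ccontr)
  assume "\<not> M \<le> p"
  then have "(p+1)^2 \<le> M^2" by (simp add: power_mono)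
  then show False using assms by (simp add: power2_eq_square algebra_simps)
qed

lemma pert_c0: "x \<in> c0 \<Longrightarrow> (\<lambda>n. x n + s * ee k n) \<in> c0"
  using c0_lin[of x "ee k" 1 s] ee_c0 by simp

lemma pert_ball: assumes "x \<in> c0_ball" "\<bar>x k\<bar> + \<bar>s\<bar> \<le> 1"
  shows "(\<lambda>n. x n + s * ee k n) \<in> c0_ball"
  unfolding c0_ball_iff
proof
  show "(\<lambda>n. x n + s * ee k n) \<in> c0" using assms pert_c0 unfolding c0_ball_iff by blast
  show "\<forall>n. \<bar>x n + s * ee k n\<bar> \<le> 1"
  proof
    fix n show "\<bar>x n + s * ee k n\<bar> \<le> 1"
    proof (cases "n = k")
      case True then show ?thesis using assms(2) unfolding ee_def by simp
    next
      case False then show ?thesis using assms(1) unfolding ee_def c0_ball_iff by simp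
    qed
  qed
qed

lemma ev_G:
  assumes G: "G \<in> SS" and x: "x \<in> G"
  shows "eventually (\<lambda>k. k \<in> Psi (x 0) \<longrightarrow> (\<forall>s. \<bar>s\<bar> \<le> 1 \<longrightarrow> (\<lambda>n. x n + s * ee k n) \<in> c0_ball
            \<longrightarrow> (\<lambda>n. x n + s * ee k n) \<in> G)) sequentially"
proof -
  from G consider (s) f a b where "G = slab f a b" "f \<in> c0_dual" | (t) c d A where "G = tube c d A" "allowed c d A"
    unfolding SS_def by blast
  then show ?thesis
  proof cases
    case s
    have xb: "x \<in> c0_ball" and ab: "a < f x" "f x < b" using x s unfolding slab_def by auto
    define r where "r = min (f x - a) (b - f x)"
    have r: "r > 0" using ab unfolding r_def by simp
    have "eventually (\<lambda>k. dist (f (ee k)) 0 < r) sequentially"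
      using dual_ee_tendsto[OF s(2)] r unfolding tendsto_iff by auto
    then show ?thesis
    proof (rule eventually_mono)
      fix k assume k: "dist (f (ee k)) 0 < r"
      show "k \<in> Psi (x 0) \<longrightarrow> (\<forall>s. \<bar>s\<bar> \<le> 1 \<longrightarrow> (\<lambda>n. x n + s * ee k n) \<in> c0_ball
            \<longrightarrow> (\<lambda>n. x n + s * ee k n) \<in> G)"
      proof (intro impI allI)
        fix s :: real assume s1: "\<bar>s\<bar> \<le> 1" and zb: "(\<lambda>n. x n + s * ee k n) \<in> c0_ball"
        have fz: "f (\<lambda>n. x n + s * ee k n) = f x + s * f (ee k)"
          using dual_lin[OF s(2)] xb ee_c0 unfolding c0_ball_def by blast
        have "\<bar>s * f (ee k)\<bar> \<le> \<bar>f (ee k)\<bar>" using s1 by (simp add: abs_mult mult_left_le_one_le)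
        then have "\<bar>s * f (ee k)\<bar> < r" using k by (simp add: dist_real_def)
        then show "(\<lambda>n. x n + s * ee k n) \<in> G" unfolding s(1) slab_def using zb fz
          unfolding r_def by auto
      qed
    qed
  next
    case t
    have xb: "x \<in> c0_ball" and x0: "\<bar>x 0 - c 0\<bar> < d" and xA: "\<forall>j\<in>A. \<bar>x j - c j\<bar> < d"
      using x t unfolding tube_def by auto
    have dis: "A \<inter> Psi (x 0) = {}" using t(2) x0 unfolding allowed_def by blast
    show ?thesis
    proof (rule always_eventually, intro allI impI)
      fix k s assume k: "k \<in> Psi (x 0)" and zb: "(\<lambda>n. x n + s * ee k n) \<in> c0_ball"
      have k0: "k \<noteq> 0" using psi_pos[OF k] .
      have kA: "k \<notin> A" using dis k by blast
      show "(\<lambda>n. x n + s * ee k n) \<in> G" unfolding t(1) tube_def using zb x0 xA k0 kA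
        by (auto simp: ee_def)
    qed
  qed
qed

lemma diam_open: assumes "Op U" "U \<noteq> {}" shows "c0_diam U = 2"
proof -
  obtain x where xU: "x \<in> U" using assms(2) by blast
  from assms(1)[unfolded Op_def, rule_format, OF xU] obtain F where
    F: "finite F" "F \<subseteq> SS" "x \<in> c0_ball" "x \<in> \<Inter>F" "c0_ball \<inter> \<Inter>F \<subseteq> U"
    by (elim exE conjE)
  have Usub: "U \<subseteq> c0_ball" using Op_sub[OF assms(1)] .
  have x0: "\<bar>x 0\<bar> \<le> 1" using F(3) unfolding c0_ball_iff by blast
  have xc0: "x \<longlonglongrightarrow> 0" using F(3) unfolding c0_ball_def c0_def by blast
  have lower: "2 - 2 * \<eta> \<le> c0_diam U" if eta: "0 < \<eta>" "\<eta> < 1" for \<eta>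
  proof -
    have e1: "eventually (\<lambda>k. \<forall>G\<in>F. k \<in> Psi (x 0) \<longrightarrow> (\<forall>s. \<bar>s\<bar> \<le> 1 \<longrightarrow> (\<lambda>n. x n + s * ee k n) \<in> c0_ball
            \<longrightarrow> (\<lambda>n. x n + s * ee k n) \<in> G)) sequentially"
      using F(1) by (rule eventually_ball_finite) (use ev_G F in blast)
    have e2: "eventually (\<lambda>k. dist (x k) 0 < \<eta>) sequentially"
      using xc0 eta tendsto_iff by blast
    obtain N where N: "\<And>k. k \<ge> N \<Longrightarrow> (\<forall>G\<in>F. k \<in> Psi (x 0) \<longrightarrow> (\<forall>s. \<bar>s\<bar> \<le> 1 \<longrightarrow> (\<lambda>n. x n + s * ee k n) \<in> c0_ball
            \<longrightarrow> (\<lambda>n. x n + s * ee k n) \<in> G)) \<and> dist (x k) 0 < \<eta>"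
      using eventually_conj[OF e1 e2] unfolding eventually_sequentially by blast
    obtain k where k: "k \<in> Psi (x 0)" "k \<ge> N" using psi_inf[OF x0] by blast
    have xk: "\<bar>x k\<bar> < \<eta>" using N[OF k(2)] by (simp add: dist_real_def)
    define zp where "zp = (\<lambda>n. x n + (1 - \<eta>) * ee k n)"
    define zm where "zm = (\<lambda>n. x n + (-(1 - \<eta>)) * ee k n)"
    have zpb: "zp \<in> c0_ball" unfolding zp_def using pert_ball[OF F(3)] xk eta by simp
    have zmb: "zm \<in> c0_ball" unfolding zm_def using pert_ball[OF F(3)] xk eta by simp
    have "\<bar>1 - \<eta>\<bar> \<le> 1" "\<bar>-(1 - \<eta>)\<bar> \<le> 1" using eta by auto
    then have "zp \<in> \<Inter>F" "zm \<in> \<Inter>F" using N[OF k(2)] k(1) zpb zmb unfolding zp_def zm_def by blast+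
    then have zU: "zp \<in> U" "zm \<in> U" using F(5) zpb zmb by blast+
    have dc0: "(\<lambda>n. zp n - zm n) \<in> c0"
      using c0_lin[of zp zm 1 "-1"] zpb zmb unfolding c0_ball_def by simp
    have "\<bar>zp k - zm k\<bar> = 2 - 2 * \<eta>" unfolding zp_def zm_def ee_def using eta by simp
    then have "2 - 2 * \<eta> \<le> c0_norm (\<lambda>n. zp n - zm n)" using c0_le_norm[OF dc0, of k] by simp
    then show ?thesis using diam_ge[OF Usub zU] by blast
  qed
  have upper: "c0_diam U \<le> 2"
    using assms(2) by (rule diam_le) (use Usub ball_diff_le2 in blast)
  show ?thesis
  proof (rule ccontr)
    assume "c0_diam U \<noteq> 2"
    then have lt: "c0_diam U < 2" using upper by simp
    have "1 \<le> c0_diam U" using lower[of "1/2"] by simp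
    moreover have "2 - 2 * ((2 - c0_diam U) / 4) \<le> c0_diam U" using lower[of "(2 - c0_diam U) / 4"] lt \<open>1 \<le> c0_diam U\<close> by simp
    ultimately show False using lt by (simp add: field_simps)
  qed
qed

lemma pert_ball2: assumes "x \<in> c0_ball" "\<bar>x k + s\<bar> \<le> 1"
  shows "(\<lambda>n. x n + s * ee k n) \<in> c0_ball"
  unfolding c0_ball_iff
proof
  show "(\<lambda>n. x n + s * ee k n) \<in> c0" using assms pert_c0 unfolding c0_ball_iff by blast
  show "\<forall>n. \<bar>x n + s * ee k n\<bar> \<le> 1"
  proof
    fix n show "\<bar>x n + s * ee k n\<bar> \<le> 1"
    proof (cases "n = k")
      case True then show ?thesis using assms(2) unfolding ee_def by simp
    next
      case False then show ?thesis using assms(1) unfolding ee_def c0_ball_iff by simp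
    qed
  qed
qed

lemma ev0_G:
  assumes G: "G \<in> SS" and x: "x \<in> G"
  shows "eventually (\<lambda>s. (\<lambda>n. x n + s * ee 0 n) \<in> c0_ball \<longrightarrow> (\<lambda>n. x n + s * ee 0 n) \<in> G) (nhds 0)"
proof -
  from G consider (sl) f a b where "G = slab f a b" "f \<in> c0_dual" | (t) c d A where "G = tube c d A" "allowed c d A"
    unfolding SS_def by blast
  then show ?thesis
  proof cases
    case sl
    have xb: "x \<in> c0_ball" and ab: "a < f x" "f x < b" using x sl unfolding slab_def by auto
    define r where "r = min (f x - a) (b - f x)"
    have r: "r > 0" using ab unfolding r_def by simp
    show ?thesis unfolding eventually_nhds_metric
    proof (intro exI[of _ "r / (\<bar>f (ee 0)\<bar> + 1)"] conjI allI impI)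
      show "0 < r / (\<bar>f (ee 0)\<bar> + 1)" using r by simp
      fix s :: real assume s: "dist s 0 < r / (\<bar>f (ee 0)\<bar> + 1)" and zb: "(\<lambda>n. x n + s * ee 0 n) \<in> c0_ball"
      have fz: "f (\<lambda>n. x n + s * ee 0 n) = f x + s * f (ee 0)"
        using dual_lin[OF sl(2)] xb ee_c0 unfolding c0_ball_def by blast
      have "\<bar>s\<bar> * (\<bar>f (ee 0)\<bar> + 1) < r" using s by (simp add: dist_real_def pos_less_divide_eq)
      moreover have "\<bar>s * f (ee 0)\<bar> \<le> \<bar>s\<bar> * (\<bar>f (ee 0)\<bar> + 1)"
        unfolding abs_mult by (intro mult_left_mono) auto
      ultimately have "\<bar>s * f (ee 0)\<bar> < r" by linarith
      then show "(\<lambda>n. x n + s * ee 0 n) \<in> G" unfolding sl(1) slab_def using zb fz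
        unfolding r_def by auto
    qed
  next
    case t
    have xb: "x \<in> c0_ball" and x0: "\<bar>x 0 - c 0\<bar> < d" and xA: "\<forall>j\<in>A. \<bar>x j - c j\<bar> < d"
      using x t unfolding tube_def by auto
    show ?thesis unfolding eventually_nhds_metric
    proof (intro exI[of _ "d - \<bar>x 0 - c 0\<bar>"] conjI allI impI)
      show "0 < d - \<bar>x 0 - c 0\<bar>" using x0 by simp
      fix s :: real assume s: "dist s 0 < d - \<bar>x 0 - c 0\<bar>" and zb: "(\<lambda>n. x n + s * ee 0 n) \<in> c0_ball"
      have z0: "\<bar>x 0 + s - c 0\<bar> < d" using s by (simp add: dist_real_def)
      show "(\<lambda>n. x n + s * ee 0 n) \<in> G" unfolding t(1) tube_def using zb z0 xA
        by (auto simp: ee_def)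
    qed
  qed
qed

lemma proj_dual: "(\<lambda>z. z k) \<in> c0_dual"
  unfolding c0_dual_def using c0_le_norm by (auto intro!: exI[of _ 1])

lemma sum_one_bad:
  fixes n :: nat
  assumes "\<And>i j. i < n \<Longrightarrow> j < n \<Longrightarrow> P i \<Longrightarrow> P j \<Longrightarrow> i = j"
  shows "(\<Sum>i<n. (if P i then (1::real) else 0)) \<le> 1"
proof (cases "\<exists>i<n. P i")
  case True
  then obtain i0 where i0: "i0 < n" "P i0" by blast
  have "(\<Sum>i<n. (if P i then (1::real) else 0)) = (\<Sum>i<n. (if i = i0 then 1 else 0))"
    by (rule sum.cong) (use assms i0 in auto)
  also have "\<dots> = 1" using i0 by (subst sum.delta) auto
  finally show ?thesis by simp
next
  case False
  then have "(\<Sum>i<n. (if P i then (1::real) else 0)) = 0" by (intro sum.neutral) auto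
  then show ?thesis by simp
qed

lemma sr_tau: "strongly_regular_open tau"
  unfolding strongly_regular_open_def
proof (intro allI impI)
  fix W and \<epsilon> :: real
  assume H: "openin tau W \<and> W \<noteq> {} \<and> seq_convex W \<and> \<epsilon> > 0"
  then have WO: "openin tau W" and Wne: "W \<noteq> {}" and eps: "\<epsilon> > 0" by auto
  have WOp: "Op W" using WO openin_tau by blast
  obtain x where xW: "x \<in> W" using Wne by blast
  from WOp[unfolded Op_def, rule_format, OF xW] obtain F where
    F: "finite F" "F \<subseteq> SS" "x \<in> c0_ball" "x \<in> \<Inter>F" "c0_ball \<inter> \<Inter>F \<subseteq> W"
    by (elim exE conjE)
  have "eventually (\<lambda>s. \<forall>G\<in>F. (\<lambda>n. x n + s * ee 0 n) \<in> c0_ball \<longrightarrow> (\<lambda>n. x n + s * ee 0 n) \<in> G) (nhds 0)"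
    using F(1) by (rule eventually_ball_finite) (use ev0_G F in blast)
  then obtain \<eta>0 where \<eta>0: "\<eta>0 > 0"
    "\<And>s. dist s 0 < \<eta>0 \<Longrightarrow> (\<forall>G\<in>F. (\<lambda>n. x n + s * ee 0 n) \<in> c0_ball \<longrightarrow> (\<lambda>n. x n + s * ee 0 n) \<in> G)"
    unfolding eventually_nhds_metric by blast
  have x0: "\<bar>x 0\<bar> \<le> 1" using F(3) unfolding c0_ball_iff by blast
  define n :: nat where "n = nat \<lceil>4 / \<epsilon>\<rceil> + 1"
  have n1: "n \<ge> 1" unfolding n_def by simp
  have npos: "real n > 0" using n1 by simp
  have "4 / \<epsilon> < real n" unfolding n_def by linarith
  then have "4 < \<epsilon> * real n" using eps by (simp add: divide_less_eq mult.commute)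
  then have neps: "2 / real n < \<epsilon> / 2" using npos by (simp add: divide_less_eq field_simps)
  define e where "e = min \<eta>0 1"
  have e: "e > 0" "e \<le> \<eta>0" "e \<le> 1" unfolding e_def using \<eta>0 by auto
  define h where "h = e / (real n + 1)"
  have hpos: "h > 0" unfolding h_def using e by simp
  have nh: "real n * h < e" unfolding h_def using e npos by (simp add: field_simps)
  have h1: "h \<le> 1"
  proof -
    have "h \<le> e" unfolding h_def using e npos by (simp add: divide_le_eq field_simps)
    then show ?thesis using e by simp
  qed
  define \<sigma> :: real where "\<sigma> = (if x 0 \<ge> 0 then -1 else 1)"
  define sc where "sc i = \<sigma> * (real i + 1) * h" for i :: nat
  have sc_abs: "\<bar>sc i\<bar> = (real i + 1) * h" for i
    unfolding sc_def \<sigma>_def using hpos by (simp add: abs_mult)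
  have sc_small: "\<bar>sc i\<bar> < e" if "i < n" for i
  proof -
    have "(real i + 1) * h \<le> real n * h" using that hpos by (intro mult_right_mono) auto
    then show ?thesis using sc_abs nh by simp
  qed
  have sc_ball: "\<bar>x 0 + sc i\<bar> \<le> 1" if "i < n" for i
  proof -
    have s1: "(real i + 1) * h \<le> 1" using sc_small[OF that] e sc_abs[of i] by simp
    have s0: "0 \<le> (real i + 1) * h" using hpos by simp
    have eq: "x 0 + sc i = (if x 0 \<ge> 0 then x 0 - (real i + 1) * h else x 0 + (real i + 1) * h)"
      unfolding sc_def \<sigma>_def by (simp add: algebra_simps)
    show ?thesis unfolding eq using s0 s1 x0 by (auto simp: abs_le_iff)
  qed
  have sc_sep: "h \<le> \<bar>sc i - sc j\<bar>" if "i \<noteq> j" for i j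
  proof -
    have "sc i - sc j = \<sigma> * ((real i - real j) * h)" unfolding sc_def by (simp add: algebra_simps)
    then have "\<bar>sc i - sc j\<bar> = \<bar>real i - real j\<bar> * h" unfolding \<sigma>_def using hpos by (simp add: abs_mult)
    moreover have "1 \<le> \<bar>real i - real j\<bar>" using that by linarith
    ultimately show ?thesis using hpos by (simp add: mult_le_cancel_right1)
  qed
  define \<delta> where "\<delta> = min (h / 4) (\<epsilon> / 8)"
  have \<delta>: "\<delta> > 0" "\<delta> \<le> h / 4" "\<delta> \<le> \<epsilon> / 8" unfolding \<delta>_def using hpos eps by auto
  define M :: nat where "M = nat \<lceil>4 / h\<rceil> + 1"
  have Mpos: "real M > 0" unfolding M_def by simp
  have "4 / h < real M" unfolding M_def by linarith
  then have "4 < h * real M" using hpos by (simp add: divide_less_eq mult.commute)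
  then have Mh: "2 / real M < h / 2" using Mpos by (simp add: divide_less_eq field_simps)
  define N where "N = M^2"
  define c where "c i = (\<lambda>k. x k + sc i * ee 0 k)" for i
  define A where "A i = {k. k \<noteq> 0 \<and> (\<forall>t. \<bar>t - (x 0 + sc i)\<bar> < \<delta> \<longrightarrow> k \<notin> Psi t)}" for i
  define K where "K = (\<lambda>k. slab (\<lambda>z. z k) (x k - \<delta>) (x k + \<delta>)) ` {1..<N}"
  define U where "U i = c0_ball \<inter> \<Inter>(F \<union> {tube (c i) \<delta> (A i)} \<union> K)" for i
  define Bad where "Bad i = {k. N \<le> k \<and> k \<notin> A i \<and> k \<noteq> 0}" for i
  define g where "g i k = (if k \<in> Bad i then 2 else 2 * \<delta>)" for i k
  have c00: "c i 0 = x 0 + sc i" for i by (simp add: c_def ee_def)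
  have ck: "k \<noteq> 0 \<Longrightarrow> c i k = x k" for i k by (simp add: c_def ee_def)
  have all: "allowed (c i) \<delta> (A i)" for i unfolding allowed_def A_def c00 by auto
  have KSS: "K \<subseteq> SS" unfolding K_def SS_def using proj_dual by blast
  have finK: "finite K" unfolding K_def by simp
  have sub: "F \<union> {tube (c i) \<delta> (A i)} \<union> K \<subseteq> SS" for i
    using F(2) KSS all unfolding SS_def by blast
  have fin: "finite (F \<union> {tube (c i) \<delta> (A i)} \<union> K)" for i using F(1) finK by simp
  have OpU: "Op (U i)" for i unfolding U_def by (rule Op_basic[OF fin sub])
  have UW: "U i \<subseteq> W" for i unfolding U_def using F(5) by blast
  have cU: "c i \<in> U i" if "i < n" for i
  proof -
    have cb: "c i \<in> c0_ball" unfolding c_def by (rule pert_ball2[OF F(3) sc_ball[OF that]])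
    have "dist (sc i) 0 < \<eta>0" using sc_small[OF that] e by (simp add: dist_real_def)
    then have cF: "c i \<in> \<Inter>F" using \<eta>0(2) cb unfolding c_def by blast
    have cT: "c i \<in> tube (c i) \<delta> (A i)" unfolding tube_def using cb \<delta> by simp
    have cK: "c i \<in> \<Inter>K" unfolding K_def slab_def using cb ck \<delta> by auto
    show ?thesis unfolding U_def using cb cF cT cK by blast
  qed
  have osc: "\<bar>u k - u' k\<bar> \<le> g i k" if "u \<in> U i" "u' \<in> U i" for i u u' k
  proof -
    have ub: "u \<in> c0_ball" "u' \<in> c0_ball" using that unfolding U_def by auto
    have ut: "u \<in> tube (c i) \<delta> (A i)" "u' \<in> tube (c i) \<delta> (A i)" using that unfolding U_def by auto
    have uK: "u \<in> \<Inter>K" "u' \<in> \<Inter>K" using that unfolding U_def by auto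
    show ?thesis
    proof (cases "k \<in> Bad i")
      case True
      have "\<bar>u k\<bar> \<le> 1" "\<bar>u' k\<bar> \<le> 1" using ub unfolding c0_ball_iff by auto
      then have "\<bar>u k - u' k\<bar> \<le> 2" by linarith
      then show ?thesis unfolding g_def using True by simp
    next
      case False
      then have cases: "k = 0 \<or> k \<in> A i \<or> (1 \<le> k \<and> k < N)" unfolding Bad_def by auto
      have "\<bar>u k - u' k\<bar> < 2 * \<delta>"
      proof -
        consider "k = 0" | "k \<in> A i" | "1 \<le> k \<and> k < N" using cases by blast
        then show ?thesis
        proof cases
          case 1
          then have "\<bar>u k - c i k\<bar> < \<delta>" "\<bar>u' k - c i k\<bar> < \<delta>" using ut unfolding tube_def by auto
          then show ?thesis by linarith
        next
          case 2
          then have "\<bar>u k - c i k\<bar> < \<delta>" "\<bar>u' k - c i k\<bar> < \<delta>" using ut unfolding tube_def by auto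
          then show ?thesis by linarith
        next
          case 3
          then have "slab (\<lambda>z. z k) (x k - \<delta>) (x k + \<delta>) \<in> K" unfolding K_def by auto
          then have "u \<in> slab (\<lambda>z. z k) (x k - \<delta>) (x k + \<delta>)" "u' \<in> slab (\<lambda>z. z k) (x k - \<delta>) (x k + \<delta>)"
            using uK by auto
          then have "\<bar>u k - x k\<bar> < \<delta>" "\<bar>u' k - x k\<bar> < \<delta>" unfolding slab_def by auto
          then show ?thesis by linarith
        qed
      qed
      then show ?thesis unfolding g_def using False by simp
    qed
  qed
  have bad_unique: "i = j" if "k \<in> Bad i" "k \<in> Bad j" for i j k
  proof (rule ccontr)
    assume ij: "i \<noteq> j"
    from that(1) obtain t where t: "\<bar>t - (x 0 + sc i)\<bar> < \<delta>" "k \<in> Psi t" unfolding Bad_def A_def by auto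
    from that(2) obtain t' where t': "\<bar>t' - (x 0 + sc j)\<bar> < \<delta>" "k \<in> Psi t'" unfolding Bad_def A_def by auto
    have kN: "N \<le> k" using that(1) unfolding Bad_def by auto
    from t(2) obtain p m where pm: "k = p^2 + m" "1 \<le> p" "m \<le> 2*p" "\<bar>t - (real m / real p - 1)\<bar> < 1 / real p"
      unfolding Psi_def by blast
    from t'(2) obtain q m' where qm: "k = q^2 + m'" "1 \<le> q" "m' \<le> 2*q" "\<bar>t' - (real m' / real q - 1)\<bar> < 1 / real q"
      unfolding Psi_def by blast
    have pq: "p = q" using sq_unique[of p m q m'] pm qm by simp
    then have mm: "m = m'" using pm(1) qm(1) by simp
    have Mp: "M \<le> p" using sq_big[of M p m] kN pm unfolding N_def by simp
    have "2 / real p \<le> 2 / real M" using Mp Mpos by (intro divide_left_mono) auto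
    then have "2 / real p < h / 2" using Mh by linarith
    moreover have "\<bar>sc i - sc j\<bar> < 2 * \<delta> + 2 / real p"
      using t(1) t'(1) pm(4) qm(4) pq mm by (simp add: abs_less_iff)
    ultimately have "\<bar>sc i - sc j\<bar> < h" using \<delta> by linarith
    then show False using sc_sep[OF ij] by linarith
  qed
  define lam :: "nat \<Rightarrow> real" where "lam i = 1 / real n" for i
  have sumlam: "(\<Sum>i<n. lam i) = 1" unfolding lam_def using npos by simp
  have diam: "c0_diam (mink_comb n lam U) \<le> 2 * \<delta> + 2 / real n"
  proof (rule diam_le)
    show "mink_comb n lam U \<noteq> {}" unfolding mink_comb_def using cU by blast
  next
    fix z z' assume z: "z \<in> mink_comb n lam U" and z': "z' \<in> mink_comb n lam U"
    from z obtain u where u: "\<forall>i<n. u i \<in> U i" "z = (\<lambda>k. \<Sum>i<n. lam i * u i k)" unfolding mink_comb_def by blast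
    from z' obtain u' where u': "\<forall>i<n. u' i \<in> U i" "z' = (\<lambda>k. \<Sum>i<n. lam i * u' i k)" unfolding mink_comb_def by blast
    show "c0_norm (\<lambda>k. z k - z' k) \<le> 2 * \<delta> + 2 / real n"
    proof (rule c0_norm_le)
      fix k
      have "z k - z' k = (\<Sum>i<n. (1 / real n) * (u i k - u' i k))"
        unfolding u(2) u'(2) lam_def by (simp add: sum_subtractf right_diff_distrib)
      then have "\<bar>z k - z' k\<bar> \<le> (\<Sum>i<n. \<bar>(1 / real n) * (u i k - u' i k)\<bar>)"
        using sum_abs[of "\<lambda>i. (1 / real n) * (u i k - u' i k)" "{..<n}"] by simp
      also have "\<dots> \<le> (\<Sum>i<n. (1 / real n) * g i k)"
      proof (rule sum_mono)
        fix i assume "i \<in> {..<n}"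
        then have "\<bar>u i k - u' i k\<bar> \<le> g i k" using osc u(1) u'(1) by auto
        then show "\<bar>(1 / real n) * (u i k - u' i k)\<bar> \<le> (1 / real n) * g i k"
          using npos by (simp add: abs_mult divide_right_mono)
      qed
      also have "\<dots> = (1 / real n) * (\<Sum>i<n. g i k)" by (simp add: sum_distrib_left)
      also have "\<dots> \<le> (1 / real n) * (2 * \<delta> * real n + 2)"
      proof (rule mult_left_mono)
        have ge: "g i k = 2 * \<delta> + (2 - 2 * \<delta>) * (if k \<in> Bad i then 1 else 0)" for i
          unfolding g_def by simp
        have "(\<Sum>i<n. g i k) = 2 * \<delta> * real n + (2 - 2 * \<delta>) * (\<Sum>i<n. (if k \<in> Bad i then (1::real) else 0))"
          unfolding ge by (simp add: sum.distrib sum_distrib_left)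
        moreover have "(\<Sum>i<n. (if k \<in> Bad i then (1::real) else 0)) \<le> 1"
          by (rule sum_one_bad) (use bad_unique in blast)
        moreover have "0 \<le> 2 - 2 * \<delta>" using \<delta> h1 by linarith
        ultimately have "(2 - 2 * \<delta>) * (\<Sum>i<n. (if k \<in> Bad i then (1::real) else 0)) \<le> (2 - 2 * \<delta>) * 1"
          by (intro mult_left_mono) auto
        then have "(2 - 2 * \<delta>) * (\<Sum>i<n. (if k \<in> Bad i then (1::real) else 0)) \<le> 2 - 2 * \<delta>"
          by simp
        then show "(\<Sum>i<n. g i k) \<le> 2 * \<delta> * real n + 2"
          using \<open>(\<Sum>i<n. g i k) = _\<close> \<delta> by linarith
      qed (use npos in simp)
      also have "\<dots> = 2 * \<delta> + 2 / real n" using npos by (simp add: field_simps)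
      finally show "\<bar>z k - z' k\<bar> \<le> 2 * \<delta> + 2 / real n" .
    qed
  qed
  have "2 * \<delta> + 2 / real n < \<epsilon>" using \<delta> neps by linarith
  then have dlt: "c0_diam (mink_comb n lam U) < \<epsilon>" using diam by linarith
  show "\<exists>m lam U. (\<forall>i<m. lam i \<ge> 0) \<and> (\<Sum>i<m. lam i) = 1 \<and>
            (\<forall>i<m. U i \<noteq> {} \<and> openin (subtopology tau W) (U i)) \<and>
            c0_diam (mink_comb m lam U) < \<epsilon>"
  proof (intro exI[of _ n] exI[of _ lam] exI[of _ U] conjI allI impI)
    fix i assume i: "i < n"
    show "0 \<le> lam i" unfolding lam_def by simp
    show "U i \<noteq> {}" using cU[OF i] by blast
    show "openin (subtopology tau W) (U i)"
      using openin_open_subtopology[OF WO] OpU UW openin_tau by blast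
  qed (use sumlam dlt in auto)
qed

theorem theorem3p2:
  shows "\<exists>\<tau> :: (nat \<Rightarrow> real) topology.
           topspace \<tau> = c0_ball \<and>
           locally_convex_top \<tau> \<and>
           (\<forall>U. openin weak_ball_topology U \<longrightarrow> openin \<tau> U) \<and>
           strongly_regular_open \<tau> \<and>
           (\<forall>U. openin \<tau> U \<and> U \<noteq> {} \<longrightarrow> c0_diam U = 2)"
proof (intro exI[of _ tau] conjI allI impI)
  show "topspace tau = c0_ball" by (rule topspace_tau)
  show "locally_convex_top tau" by (rule lc_tau)
  show "strongly_regular_open tau" by (rule sr_tau)
  fix U
  show "openin weak_ball_topology U \<Longrightarrow> openin tau U" by (rule weak_tau)
next
  fix U assume "openin tau U \<and> U \<noteq> {}"
  then show "c0_diam U = 2" using diam_open openin_tau by blast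
qed

end
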